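(* Let $(M,\mathbf g)$ be a $4$-dimensional space-time whose metric has the form $$\mathbf g=-\Big(1-\frac{2m(r)}{r}\Big)e^{\mu(r)}dt^2+\Big(1-\frac{2m(r)}{r}\Big)^{-1}dr^2+r^2(d\theta^2+\sin^2\theta\,d\phi^2)$$ for $0<r<\infty$, with $m$ and $\mu$ both $C^1$, piecewise $C^2$ functions of $r\in(0,\infty)$. If the following all hold: (1) the matter is a perfect fluid, i.e. $p_1(r)=p_2(r)=:p(r)$ (pressure) with density $\rho(r)$; (2) $\lim_{r\to\infty}4\pi r^2p(r)=\lim_{r\to\infty}4\pi r^2\rho(r)=0$; (3) $\tfrac{24}{7}m(r)<r$ for all $r\in(0,\infty)$; (4) $p(r)\le\rho(r)/3$ for all $r\in(0,\infty)$, then $(M,\mathbf g)$ contains no $SO(3)\times\mathbb R$-invariant timelike photon surfaces.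
   Context: With primes denoting $d/dr$, the functions $\rho,p_1,p_2$ are defined by $8\pi\rho=\frac{2m'}{r^2}$, $8\pi p_1=\frac{1}{r^2}\{(r-2m)\mu'-2m'\}$, $8\pi p_2=\frac{1}{4r^2}\{2(r+m-3rm')\mu'+r(r-2m)(\mu')^2-4rm''+2r(r-2m)\mu''\}$, so that the Einstein tensor is $G^a{}_b=8\pi\,\mathrm{diag}(-\rho,p_1,p_2,p_2)$ in coordinates $(t,r,\theta,\phi)$. A function on an interval $I$ is piecewise $C^k$ if $I$ is the disjoint union of a locally finite collection of intervals $I_i$ (open, closed or half-open) with $f|_{I_i}$ of class $C^k$. The metric admits the isometry group $SO(3)\times\mathbb R$ (rotations and $t$-translations); a hypersurface is $SO(3)\times\mathbb R$-invariant if each group element maps it onto itself. A photon surface of $(M,\mathbf g)$ is an immersed, nowhere-spacelike hypersurface $S$ such that for every $p\in S$ and every null vector $\mathbf k\in T_pS$ there exists a null geodesic $\gamma:(-\epsilon,\epsilon)\to M$ of $(M,\mathbf g)$ with $\dot\gamma(0)=\mathbf k$ and image contained in $S$. *)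

theory Defs
  imports "HOL-Analysis.Analysis"
begin

type_synonym pt = "real \<times> (real^3)"   (* (t, y) with y = r * (point of S^2), r = norm y *)

definition C1_on :: "real set \<Rightarrow> (real \<Rightarrow> real) \<Rightarrow> bool" where
  "C1_on I f \<longleftrightarrow> (\<exists>f'. (\<forall>x\<in>I. (f has_real_derivative f' x) (at x)) \<and> continuous_on I f')"

definition C2_restr :: "real set \<Rightarrow> (real \<Rightarrow> real) \<Rightarrow> bool" where
  "C2_restr J f \<longleftrightarrow> (\<exists>f1 f2. (\<forall>x\<in>J. (f has_real_derivative f1 x) (at x within J)
        \<and> (f1 has_real_derivative f2 x) (at x within J)) \<and> continuous_on J f2)"

definition piecewise_C2 :: "real set \<Rightarrow> (real \<Rightarrow> real) \<Rightarrow> bool" where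
  "piecewise_C2 I f \<longleftrightarrow> (\<exists>\<I>. (\<forall>J\<in>\<I>. is_interval J \<and> J \<noteq> {}) \<and> disjoint \<I> \<and> \<Union>\<I> = I
      \<and> (\<forall>x\<in>I. \<exists>e>0. finite {J\<in>\<I>. J \<inter> ball x e \<noteq> {}})
      \<and> (\<forall>J\<in>\<I>. C2_restr J f))"

text \<open>Matter functions (with primes = d/dr); second derivatives passed explicitly.\<close>

definition rho :: "(real \<Rightarrow> real) \<Rightarrow> real \<Rightarrow> real" where
  "rho m r = (2 * deriv m r / r\<^sup>2) / (8 * pi)"

definition p1 :: "(real \<Rightarrow> real) \<Rightarrow> (real \<Rightarrow> real) \<Rightarrow> real \<Rightarrow> real" where
  "p1 m mu r = (((r - 2 * m r) * deriv mu r - 2 * deriv m r) / r\<^sup>2) / (8 * pi)"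

definition p2 :: "(real \<Rightarrow> real) \<Rightarrow> (real \<Rightarrow> real) \<Rightarrow> real \<Rightarrow> real \<Rightarrow> real \<Rightarrow> real" where
  "p2 m mu m2 mu2 r = ((2 * (r + m r - 3 * r * deriv m r) * deriv mu r
        + r * (r - 2 * m r) * (deriv mu r)\<^sup>2 - 4 * r * m2 + 2 * r * (r - 2 * m r) * mu2)
        / (4 * r\<^sup>2)) / (8 * pi)"

text \<open>The space-time M = R x (R^3 - {0}) with the metric in Cartesian-type coordinates:
  r = |y|, dr = (y.dy)/r, r^2 (d theta^2 + sin^2 theta d phi^2) = |dy|^2 - dr^2.\<close>

definition spacetime :: "pt set" where
  "spacetime = {(t, y). y \<noteq> 0}"

definition metric :: "(real \<Rightarrow> real) \<Rightarrow> (real \<Rightarrow> real) \<Rightarrow> pt \<Rightarrow> pt \<Rightarrow> pt \<Rightarrow> real" where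
  "metric m mu p v w =
     (let y = snd p; r = norm y; F = 1 - 2 * m r / r;
          a = fst v; u = snd v; b = fst w; z = snd w
      in - F * exp (mu r) * a * b + (1 / F) * (y \<bullet> u) * (y \<bullet> z) / r\<^sup>2
         + (u \<bullet> z) - (y \<bullet> u) * (y \<bullet> z) / r\<^sup>2)"

definition dmetric :: "(real \<Rightarrow> real) \<Rightarrow> (real \<Rightarrow> real) \<Rightarrow> pt \<Rightarrow> pt \<Rightarrow> pt \<Rightarrow> real" where
  "dmetric m mu p w v = deriv (\<lambda>h. metric m mu (p + h *\<^sub>R w) v v) 0"

text \<open>Geodesic on (-eps, eps): Euler-Lagrange form of the geodesic equation,
  d/ds g(gamma', w) = 1/2 (d_w g)(gamma', gamma') for every constant vector w.\<close>
definition geodesic :: "(real \<Rightarrow> real) \<Rightarrow> (real \<Rightarrow> real) \<Rightarrow> (real \<Rightarrow> pt) \<Rightarrow> real \<Rightarrow> bool" where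
  "geodesic m mu \<gamma> eps \<longleftrightarrow> eps > 0 \<and> (\<forall>s\<in>{-eps<..<eps}. \<gamma> s \<in> spacetime) \<and>
     (\<exists>v. \<forall>s\<in>{-eps<..<eps}. (\<gamma> has_vector_derivative v s) (at s) \<and>
        (\<forall>w. ((\<lambda>s. metric m mu (\<gamma> s) (v s) w) has_real_derivative
               (1/2 * dmetric m mu (\<gamma> s) w (v s))) (at s)))"

text \<open>An immersed hypersurface, given as a countable family of C^1 immersions
  phi_i : U_i -> M (U_i open in R^3) with derivatives Dphi_i; S is the union of the images.
  (Equivalently: an immersion of the disjoint union of the U_i, i.e. of a second countable
  3-manifold.)\<close>
definition immersed_hypersurface ::
  "pt set \<Rightarrow> (nat \<Rightarrow> (real^3) set) \<Rightarrow> (nat \<Rightarrow> real^3 \<Rightarrow> pt) \<Rightarrow> (nat \<Rightarrow> real^3 \<Rightarrow> real^3 \<Rightarrow> pt) \<Rightarrow> bool" where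
  "immersed_hypersurface S U \<phi> D \<longleftrightarrow>
     S = (\<Union>i. \<phi> i ` U i) \<and> S \<subseteq> spacetime \<and>
     (\<forall>i. open (U i) \<and>
        (\<forall>u\<in>U i. (\<phi> i has_derivative D i u) (at u) \<and> inj (D i u)) \<and>
        (\<forall>z. continuous_on (U i) (\<lambda>u. D i u z)))"

definition timelike_photon_surface :: "(real \<Rightarrow> real) \<Rightarrow> (real \<Rightarrow> real) \<Rightarrow> pt set \<Rightarrow> bool" where
  "timelike_photon_surface m mu S \<longleftrightarrow> S \<noteq> {} \<and>
     (\<exists>U \<phi> D. immersed_hypersurface S U \<phi> D \<and>
       (\<forall>i. \<forall>u\<in>U i. \<exists>z. metric m mu (\<phi> i u) (D i u z) (D i u z) < 0) \<and>
       (\<forall>i. \<forall>u\<in>U i. \<forall>k\<in>range (D i u).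
          k \<noteq> 0 \<and> metric m mu (\<phi> i u) k k = 0 \<longrightarrow>
          (\<exists>\<gamma> eps. geodesic m mu \<gamma> eps \<and> \<gamma> 0 = \<phi> i u \<and>
             (\<gamma> has_vector_derivative k) (at 0) \<and> \<gamma> ` {-eps<..<eps} \<subseteq> S)))"

definition rotation3 :: "(real^3 \<Rightarrow> real^3) \<Rightarrow> bool" where
  "rotation3 f \<longleftrightarrow> orthogonal_transformation f \<and> det (matrix f) = 1"

definition SO3R_invariant :: "pt set \<Rightarrow> bool" where
  "SO3R_invariant S \<longleftrightarrow>
     (\<forall>f \<tau>. rotation3 f \<longrightarrow> (\<lambda>(t, y). (t + \<tau>, f y)) ` S = S)"

end

theory Submission
  imports Defs
begin

definition Qf :: "(real \<Rightarrow> real) \<Rightarrow> (real \<Rightarrow> real) \<Rightarrow> real \<Rightarrow> real" where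
  "Qf m mu r = ((r - 2 * m r) * deriv mu r - 2 * deriv m r) / 2"
definition hfun :: "(real \<Rightarrow> real) \<Rightarrow> (real \<Rightarrow> real) \<Rightarrow> real \<Rightarrow> real" where
  "hfun m mu r = r - 3 * m r - r * Qf m mu r"
definition Ef :: "(real \<Rightarrow> real) \<Rightarrow> (real \<Rightarrow> real) \<Rightarrow> real \<Rightarrow> real" where
  "Ef m mu r = 1 - 3 * (deriv m r + Qf m mu r)
     + (deriv m r + Qf m mu r) * (m r + r * Qf m mu r) / (r - 2 * m r)"

lemma h_deriv:
  assumes r: "r > 0" and d: "r - 2 * m r \<noteq> 0"
    and dm: "(m has_real_derivative deriv m r) (at r)"
    and dm2: "(deriv m has_real_derivative m2) (at r)"
    and dmu2: "(deriv mu has_real_derivative mu2) (at r)"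
    and fl: "p1 m mu r = p2 m mu m2 mu2 r"
  shows "(hfun m mu has_real_derivative Ef m mu r) (at r)"
proof -
  let ?n = "deriv m r" and ?u = "deriv mu r" and ?m = "m r"
  have D: "(hfun m mu has_real_derivative
      1 - 3 * ?n - ((r - 2 * ?m) * ?u - 2 * ?n) / 2
      - r * ((1 - 2 * ?n) * ?u + (r - 2 * ?m) * mu2 - 2 * m2) / 2) (at r)"
    unfolding hfun_def[abs_def] Qf_def
    by (rule derivative_eq_intros dm dm2 dmu2 refl | simp)+
  have fl1: "(((r - 2 * ?m) * ?u - 2 * ?n) / r\<^sup>2) / (8 * pi) =
      ((2 * (r + ?m - 3 * r * ?n) * ?u + r * (r - 2 * ?m) * ?u\<^sup>2 - 4 * r * m2
        + 2 * r * (r - 2 * ?m) * mu2) / (4 * r\<^sup>2)) / (8 * pi)"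
    using fl unfolding p1_def p2_def .
  have fl2: "((r - 2 * ?m) * ?u - 2 * ?n) / r\<^sup>2 =
      (2 * (r + ?m - 3 * r * ?n) * ?u + r * (r - 2 * ?m) * ?u\<^sup>2 - 4 * r * m2
        + 2 * r * (r - 2 * ?m) * mu2) / (4 * r\<^sup>2)"
    using fl1 pi_gt_zero by (metis divide_cancel_right less_irrefl mult_eq_0_iff zero_neq_numeral)
  have key: "4 * ((r - 2 * ?m) * ?u - 2 * ?n) =
      2 * (r + ?m - 3 * r * ?n) * ?u + r * (r - 2 * ?m) * ?u\<^sup>2 - 4 * r * m2
        + 2 * r * (r - 2 * ?m) * mu2"
  proof -
    have "4 * ((r - 2 * ?m) * ?u - 2 * ?n) = 4 * r\<^sup>2 * (((r - 2 * ?m) * ?u - 2 * ?n) / r\<^sup>2)"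
      using r by simp
    also have "\<dots> = 4 * r\<^sup>2 * ((2 * (r + ?m - 3 * r * ?n) * ?u + r * (r - 2 * ?m) * ?u\<^sup>2 - 4 * r * m2
        + 2 * r * (r - 2 * ?m) * mu2) / (4 * r\<^sup>2))" using fl2 by simp
    also have "\<dots> = 2 * (r + ?m - 3 * r * ?n) * ?u + r * (r - 2 * ?m) * ?u\<^sup>2 - 4 * r * m2
        + 2 * r * (r - 2 * ?m) * mu2" using r by simp
    finally show ?thesis .
  qed
  have "1 - 3 * ?n - ((r - 2 * ?m) * ?u - 2 * ?n) / 2
      - r * ((1 - 2 * ?n) * ?u + (r - 2 * ?m) * mu2 - 2 * m2) / 2 = Ef m mu r"
  proof -
    have nz: "2 * r * (r - 2 * ?m) \<noteq> 0" using r d by simp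
    have mu2eq: "mu2 = (4 * ((r - 2 * ?m) * ?u - 2 * ?n) - 2 * (r + ?m - 3 * r * ?n) * ?u
        - r * (r - 2 * ?m) * ?u\<^sup>2 + 4 * r * m2) / (2 * r * (r - 2 * ?m))"
      using key nz by (simp add: field_simps)
    show ?thesis unfolding Ef_def Qf_def mu2eq using d r
      by (simp add: field_simps power2_eq_square)
  qed
  then show ?thesis using D by simp
qed

lemma C1_facts:
  assumes "C1_on {0<..} f"
  shows "\<forall>r>0. (f has_real_derivative deriv f r) (at r)"
    and "continuous_on {0<..} (deriv f)" and "continuous_on {0<..} f"
proof -
  obtain f' where d: "\<forall>x\<in>{0<..}. (f has_real_derivative f' x) (at x)"
    and c: "continuous_on {0<..} f'"
    using assms unfolding C1_on_def by blast
  have eq: "\<forall>x\<in>{0<..}. deriv f x = f' x" using d DERIV_imp_deriv by blast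
  show "\<forall>r>0. (f has_real_derivative deriv f r) (at r)" using d eq by auto
  have "continuous_on {0<..} (deriv f) = continuous_on {0<..} f'"
    by (rule continuous_on_cong) (auto simp: eq)
  then show "continuous_on {0<..} (deriv f)" using c by simp
  show "continuous_on {0<..} f"
    using d by (meson DERIV_continuous continuous_at_imp_continuous_on)
qed

lemma interval_interior:
  fixes J :: "real set"
  assumes iv: "is_interval J" and x: "x \<in> J" and ni: "x \<noteq> Inf J" and ns: "x \<noteq> Sup J"
  shows "\<exists>a b. a < x \<and> x < b \<and> {a<..<b} \<subseteq> J"
proof -
  have "\<exists>b\<in>J. x < b"
  proof (rule ccontr)
    assume H: "\<not> (\<exists>b\<in>J. x < b)"
    have le: "y \<le> x" if "y \<in> J" for y
      using H that not_le by blast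
    have "Sup J = x" by (rule cSup_eq_maximum) (use x le in auto)
    then show False using ns by simp
  qed
  then obtain b where b: "b \<in> J" "x < b" by blast
  have "\<exists>a\<in>J. a < x"
  proof (rule ccontr)
    assume H: "\<not> (\<exists>a\<in>J. a < x)"
    have le: "x \<le> y" if "y \<in> J" for y
      using H that not_le by blast
    have "Inf J = x" by (rule cInf_eq_minimum) (use x le in auto)
    then show False using ni by simp
  qed
  then obtain a where a: "a \<in> J" "a < x" by blast
  have "{a<..<b} \<subseteq> J"
  proof
    fix y assume "y \<in> {a<..<b}"
    then have "a \<le> y" "y \<le> b" by auto
    then show "y \<in> J" using iv a(1) b(1) unfolding is_interval_1 by blast
  qed
  then show ?thesis using a b by blast
qed

lemma pc2_good:
  assumes pc: "piecewise_C2 {0<..} f"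
    and d: "\<forall>r>0. (f has_real_derivative deriv f r) (at r)" and z: "z > 0"
  shows "\<exists>\<delta>>0. \<forall>x. z < x \<and> x < z + \<delta> \<longrightarrow> (\<exists>f2. (deriv f has_real_derivative f2) (at x))"
proof -
  obtain I where I1: "\<forall>J\<in>I. is_interval J \<and> J \<noteq> {}" and I2: "\<Union>I = {0<..}"
    and I3: "\<forall>x\<in>{0<..}. \<exists>e>0. finite {J\<in>I. J \<inter> ball x e \<noteq> {}}"
    and I4: "\<forall>J\<in>I. C2_restr J f"
    using pc unfolding piecewise_C2_def by blast
  obtain e where e: "e > 0" and fin: "finite {J\<in>I. J \<inter> ball z e \<noteq> {}}"
    using I3 z by auto
  define F where "F = {J\<in>I. J \<inter> ball z e \<noteq> {}}"
  define B where "B = (\<Union>J\<in>F. {Inf J, Sup J})"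
  have finB: "finite B" unfolding B_def using fin F_def by auto
  obtain d0 where d0: "d0 > 0" "\<forall>b\<in>B. b \<noteq> z \<longrightarrow> d0 \<le> dist z b"
    using finite_set_avoid[OF finB, of z] by blast
  have "\<exists>f2. (deriv f has_real_derivative f2) (at x)" if x: "z < x" "x < z + min e d0" for x
  proof -
    have "x \<in> \<Union>I" using x z I2 by auto
    then obtain J where J: "J \<in> I" "x \<in> J" by blast
    have "dist z x < e" using x by (simp add: dist_real_def)
    then have "J \<in> F" unfolding F_def using J by auto
    have xB: "x \<notin> B"
    proof
      assume "x \<in> B"
      then have "d0 \<le> dist z x" using d0 x by auto
      then show False using x by (simp add: dist_real_def)
    qed
    then have "x \<noteq> Inf J" "x \<noteq> Sup J" using \<open>J \<in> F\<close> unfolding B_def by auto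
    then obtain a b where ab: "a < x" "x < b" "{a<..<b} \<subseteq> J"
      using interval_interior I1 J by blast
    obtain f1 f2 where C: "\<forall>y\<in>J. (f has_real_derivative f1 y) (at y within J)
        \<and> (f1 has_real_derivative f2 y) (at y within J)"
      using I4 J unfolding C2_restr_def by blast
    have intJ: "y \<in> interior J" if "y \<in> {a<..<b}" for y
      using interior_maximal[OF ab(3) open_greaterThanLessThan] that by blast
    have JI: "J \<subseteq> {0<..}" using J I2 by blast
    have eq: "f1 y = deriv f y" if y: "y \<in> {a<..<b}" for y
    proof -
      have yJ: "y \<in> J" using y ab by auto
      have "(f has_real_derivative f1 y) (at y)"
        using C yJ at_within_interior[OF intJ[OF y]] by metis
      moreover have "(f has_real_derivative deriv f y) (at y)" using d yJ JI by auto
      ultimately show ?thesis by (rule DERIV_unique)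
    qed
    have xab: "x \<in> {a<..<b}" using ab by auto
    have "(f1 has_real_derivative f2 x) (at x)"
      using C J(2) at_within_interior[OF intJ[OF xab]] by metis
    then have "(deriv f has_real_derivative f2 x) (at x)"
      by (rule has_field_derivative_transform_within_open[OF _ open_greaterThanLessThan xab])
         (simp add: eq)
    then show ?thesis by blast
  qed
  moreover have "min e d0 > 0" using e d0 by simp
  ultimately show ?thesis by blast
qed

lemma no_zero:
  fixes m mu :: "real \<Rightarrow> real"
  assumes reg_m: "C1_on {0<..} m" "piecewise_C2 {0<..} m"
    and reg_mu: "C1_on {0<..} mu" "piecewise_C2 {0<..} mu"
    and fluid: "\<forall>r>0. \<forall>m2 mu2. (deriv m has_real_derivative m2) (at r)
                   \<and> (deriv mu has_real_derivative mu2) (at r)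
                   \<longrightarrow> p1 m mu r = p2 m mu m2 mu2 r"
    and lim_p: "((\<lambda>r. 4 * pi * r\<^sup>2 * p1 m mu r) \<longlongrightarrow> 0) at_top"
    and bound: "\<forall>r>0. 24 / 7 * m r < r"
    and energy: "\<forall>r>0. p1 m mu r \<le> rho m r / 3"
    and r0: "r0 > 0"
  shows "hfun m mu r0 \<noteq> 0"
proof
  assume h0: "hfun m mu r0 = 0"
  note Cm = C1_facts[OF reg_m(1)] and Cmu = C1_facts[OF reg_mu(1)]
  have pos: "r - 2 * m r > 0" if "r > 0" for r using bound that by force
  have contQ: "continuous_on {0<..} (Qf m mu)"
    unfolding Qf_def[abs_def] by (intro continuous_intros Cm Cmu) auto
  have contH: "continuous_on {0<..} (hfun m mu)"
    unfolding hfun_def[abs_def] by (intro continuous_intros Cm Cmu contQ)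
  have contE: "continuous_on {0<..} (Ef m mu)"
    unfolding Ef_def[abs_def] by (intro continuous_intros Cm Cmu contQ) (use pos in force)
  have Qp1: "4 * pi * r\<^sup>2 * p1 m mu r = Qf m mu r" if "r > 0" for r
    using that unfolding p1_def Qf_def by (simp add: field_simps)
  have Qle: "Qf m mu r \<le> deriv m r / 3" if r: "r > 0" for r
  proof -
    have "p1 m mu r \<le> rho m r / 3" using energy r by auto
    then have "4 * pi * r\<^sup>2 * p1 m mu r \<le> 4 * pi * r\<^sup>2 * (rho m r / 3)"
      by (intro mult_left_mono) auto
    also have "4 * pi * r\<^sup>2 * (rho m r / 3) = deriv m r / 3"
      using r unfolding rho_def by (simp add: field_simps)
    finally show ?thesis using Qp1[OF r] by simp
  qed
  have limQ: "(Qf m mu \<longlongrightarrow> 0) at_top"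
  proof -
    have "\<forall>\<^sub>F r in at_top. 4 * pi * r\<^sup>2 * p1 m mu r = Qf m mu r"
      using eventually_gt_at_top[of 0] by eventually_elim (use Qp1 in auto)
    then show ?thesis using lim_p tendsto_cong by fastforce
  qed
  have "\<forall>\<^sub>F r in at_top. Qf m mu r < 1/8"
    using order_tendstoD(2)[OF limQ, of "1/8"] by simp
  then obtain N where N: "\<And>r. r \<ge> N \<Longrightarrow> Qf m mu r < 1/8"
    unfolding eventually_at_top_linorder by blast
  define R where "R = max N (r0 + 1)"
  have R: "R > r0" "R \<ge> N" unfolding R_def by auto
  have hR: "hfun m mu R > 0"
  proof -
    have "R > 0" using R r0 by simp
    have "3 * m R < 7 * R / 8" using bound \<open>R > 0\<close> by force
    moreover have "R * Qf m mu R < R * (1/8)" using N[OF R(2)] \<open>R > 0\<close> by simp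
    ultimately show ?thesis unfolding hfun_def by simp
  qed
  have zero_step: "\<exists>\<delta>>0. \<forall>x. z < x \<and> x < z + \<delta> \<longrightarrow> hfun m mu x < 0"
    if z: "z > 0" and hz: "hfun m mu z = 0" for z
  proof -
    have Ez: "Ef m mu z < 0"
    proof -
      have q: "z * Qf m mu z = z - 3 * m z" using hz unfolding hfun_def by simp
      have "3 * m z < 7 * z / 8" using bound z by force
      then have "z * Qf m mu z > z * (1/8)" using q by simp
      then have Q8: "Qf m mu z > 1/8" using z by simp
      have n: "deriv m z \<ge> 3 * Qf m mu z" using Qle[OF z] by simp
      have eq1: "m z + z * Qf m mu z = z - 2 * m z" using q by simp
      have "Ef m mu z = 1 - 3 * (deriv m z + Qf m mu z)
          + (deriv m z + Qf m mu z) * ((z - 2 * m z) / (z - 2 * m z))"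
        unfolding Ef_def eq1 by simp
      also have "(z - 2 * m z) / (z - 2 * m z) = 1" using pos[OF z] by simp
      finally have "Ef m mu z = 1 - 2 * (deriv m z + Qf m mu z)" by simp
      then show ?thesis using Q8 n by simp
    qed
    have "isCont (Ef m mu) z"
      using contE z continuous_on_eq_continuous_at[OF open_greaterThan, of 0 "Ef m mu"] by auto
    then have "\<forall>\<^sub>F x in at z. Ef m mu x < 0"
      using Ez order_tendstoD(2) unfolding isCont_def by (metis eventually_at_filter)
    then obtain d1 where d1: "d1 > 0" "\<And>x. x \<noteq> z \<Longrightarrow> dist x z < d1 \<Longrightarrow> Ef m mu x < 0"
      unfolding eventually_at by blast
    obtain d2 where d2: "d2 > 0" "\<forall>x. z < x \<and> x < z + d2 \<longrightarrow> (\<exists>f2. (deriv m has_real_derivative f2) (at x))"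
      using pc2_good[OF reg_m(2) Cm(1) z] by blast
    obtain d3 where d3: "d3 > 0" "\<forall>x. z < x \<and> x < z + d3 \<longrightarrow> (\<exists>f2. (deriv mu has_real_derivative f2) (at x))"
      using pc2_good[OF reg_mu(2) Cmu(1) z] by blast
    define \<delta> where "\<delta> = min d1 (min d2 d3)"
    have Hd: "(hfun m mu has_real_derivative Ef m mu y) (at y)" "Ef m mu y < 0"
      if y: "z < y" "y < z + \<delta>" for y
    proof -
      obtain m2 where m2: "(deriv m has_real_derivative m2) (at y)" using d2 y \<delta>_def by auto
      obtain mu2 where mu2: "(deriv mu has_real_derivative mu2) (at y)" using d3 y \<delta>_def by auto
      have y0: "y > 0" using y z by simp
      show "(hfun m mu has_real_derivative Ef m mu y) (at y)"
        using h_deriv[OF y0 _ _ m2 mu2] pos[OF y0] Cm(1) y0 fluid m2 mu2 by auto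
      show "Ef m mu y < 0" using d1(2)[of y] y \<delta>_def by (simp add: dist_real_def)
    qed
    have "hfun m mu x < 0" if x: "z < x" "x < z + \<delta>" for x
    proof -
      have "continuous_on {z..x} (hfun m mu)"
        by (rule continuous_on_subset[OF contH]) (use z in auto)
      moreover have "hfun m mu differentiable at y" if "z < y" "y < x" for y
        using Hd(1)[of y] that x real_differentiable_def by force
      ultimately obtain l y where y: "z < y" "y < x" "(hfun m mu has_real_derivative l) (at y)"
        "hfun m mu x - hfun m mu z = (x - z) * l"
        using MVT[OF x(1)] by blast
      have "l = Ef m mu y" using DERIV_unique[OF y(3) Hd(1)] y x by simp
      then have "l < 0" using Hd(2)[of y] y x by simp
      then show ?thesis using y(4) hz x by (simp add: mult_pos_neg)
    qed
    moreover have "\<delta> > 0" using d1 d2 d3 \<delta>_def by simp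
    ultimately show ?thesis by blast
  qed
  define Z where "Z = {x \<in> {r0..R}. hfun m mu x = 0}"
  have cH: "continuous_on {r0..R} (hfun m mu)"
    by (rule continuous_on_subset[OF contH]) (use r0 in auto)
  have "closed Z" unfolding Z_def
    by (rule continuous_closed_preimage_constant[OF cH closed_atLeastAtMost])
  moreover have "bounded Z" unfolding Z_def by (rule bounded_subset[OF bounded_closed_interval]) auto
  ultimately have "compact Z" using compact_eq_bounded_closed by blast
  moreover have "r0 \<in> Z" using h0 R unfolding Z_def by auto
  then have "Z \<noteq> {}" by blast
  ultimately obtain z where zZ: "z \<in> Z" and zmax: "\<And>y. y \<in> Z \<Longrightarrow> y \<le> z"
    using compact_attains_sup by metis
  have z: "z \<ge> r0" "z \<le> R" "hfun m mu z = 0" using zZ unfolding Z_def by auto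
  have "z \<noteq> R" using z hR by auto
  then have zR: "z < R" using z by simp
  obtain \<delta> where d: "\<delta> > 0" "\<forall>x. z < x \<and> x < z + \<delta> \<longrightarrow> hfun m mu x < 0"
    using zero_step[of z] z r0 by auto
  define c where "c = min \<delta> (R - z)"
  have c: "c > 0" "c \<le> \<delta>" "c \<le> R - z" using d zR unfolding c_def by auto
  define x where "x = z + c / 2"
  have x: "z < x" "x < z + \<delta>" "x < R" unfolding x_def using c by linarith+
  have hx: "hfun m mu x < 0" using d x by auto
  have "continuous_on {x..R} (hfun m mu)"
    by (rule continuous_on_subset[OF cH]) (use x z in auto)
  then obtain y where y: "x \<le> y" "y \<le> R" "hfun m mu y = 0"
    using IVT'[of "hfun m mu" x 0 R] hx hR x by auto
  have "y \<in> Z" using y x z unfolding Z_def by auto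
  then have "y \<le> z" by (rule zmax)
  then show False using y x by simp
qed

lemma sq_mult_deriv:
  fixes K :: "real \<Rightarrow> real"
  assumes "isCont K 0"
  shows "((\<lambda>h. h\<^sup>2 * K h) has_real_derivative 0) (at 0)"
proof -
  have eq: "(\<lambda>y. (y\<^sup>2 * K y - 0\<^sup>2 * K 0) / (y - 0)) = (\<lambda>y. y * K y)"
    by (rule ext) (simp add: power2_eq_square)
  have "((\<lambda>y. y * K y) \<longlongrightarrow> 0 * K 0) (at 0)"
    using assms unfolding isCont_def by (intro tendsto_intros) auto
  then show ?thesis unfolding has_field_derivative_iff eq by simp
qed

lemma dmetric_spatial:
  fixes Y0 e u0 :: "real^3"
  assumes Y0: "Y0 \<noteq> 0" and Yu: "Y0 \<bullet> u0 = 0"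
    and dm: "(m has_real_derivative M1) (at (norm Y0))"
    and dmu: "(mu has_real_derivative U1) (at (norm Y0))"
    and F0: "1 - 2 * m (norm Y0) / norm Y0 \<noteq> 0"
  shows "dmetric m mu (t0, Y0) (0, e) (a0, u0) =
    - (a0 * a0) * ((2 * m (norm Y0) / (norm Y0)\<^sup>2 - 2 * M1 / norm Y0) * exp (mu (norm Y0))
        + (1 - 2 * m (norm Y0) / norm Y0) * exp (mu (norm Y0)) * U1) * ((Y0 \<bullet> e) / norm Y0)"
proof -
  define r0 where "r0 = norm Y0"
  have r0: "r0 > 0" using Y0 r0_def by simp
  define n where "n = (\<lambda>h::real. norm (Y0 + h *\<^sub>R e))"
  define c where "c = e \<bullet> u0"
  define Dn where "Dn = (Y0 \<bullet> e) / r0"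
  have n0: "n 0 = r0" unfolding n_def r0_def by simp
  have dn: "(n has_real_derivative Dn) (at 0)"
  proof -
    have 1: "((\<lambda>h::real. Y0 + h *\<^sub>R e) has_derivative (\<lambda>h. h *\<^sub>R e)) (at 0)"
      by (auto intro!: derivative_eq_intros)
    have 2: "(norm has_derivative (\<lambda>v. v \<bullet> sgn Y0)) (at (Y0 + 0 *\<^sub>R e))"
      using has_derivative_norm[OF Y0] by simp
    have "(n has_derivative (\<lambda>h. (h *\<^sub>R e) \<bullet> sgn Y0)) (at 0)"
      unfolding n_def by (rule has_derivative_compose[OF 1 2])
    moreover have "(\<lambda>h. (h *\<^sub>R e) \<bullet> sgn Y0) = (*) Dn"
      unfolding Dn_def r0_def sgn_div_norm
      by (rule ext) (simp add: inner_commute field_simps)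
    ultimately show ?thesis unfolding has_field_derivative_def by simp
  qed
  have cn: "isCont n 0" using dn DERIV_isCont by blast
  have dmn: "((\<lambda>h. m (n h)) has_real_derivative M1 * Dn) (at 0)"
    using DERIV_chain2[OF _ dn, of m M1] dm n0 r0_def by simp
  have dmun: "((\<lambda>h. mu (n h)) has_real_derivative U1 * Dn) (at 0)"
    using DERIV_chain2[OF _ dn, of mu U1] dmu n0 r0_def by simp
  have cmn: "isCont (\<lambda>h. m (n h)) 0" using dmn DERIV_isCont by blast
  define K where "K = (\<lambda>h. (1 / (1 - 2 * m (n h) / n h)) * c * c / (n h)\<^sup>2 - c * c / (n h)\<^sup>2)"
  have cK: "isCont K 0"
    unfolding K_def using F0 r0 n0 r0_def
    by (intro continuous_intros cn cmn) auto
  define A where "A = (\<lambda>h. - (1 - 2 * m (n h) / n h) * exp (mu (n h)) * a0 * a0)"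
  have Geq: "(\<lambda>h. metric m mu ((t0, Y0) + h *\<^sub>R (0, e)) (a0, u0) (a0, u0))
      = (\<lambda>h. A h + h\<^sup>2 * K h + u0 \<bullet> u0)"
  proof (rule ext)
    fix h :: real
    have p: "(t0, Y0) + h *\<^sub>R (0, e) = (t0, Y0 + h *\<^sub>R e)" by simp
    have i: "(Y0 + h *\<^sub>R e) \<bullet> u0 = h * c" unfolding c_def using Yu
      by (simp add: inner_add_left)
    show "metric m mu ((t0, Y0) + h *\<^sub>R (0, e)) (a0, u0) (a0, u0) = A h + h\<^sup>2 * K h + u0 \<bullet> u0"
      unfolding p metric_def Let_def A_def K_def n_def[symmetric] using i
      by (simp add: n_def power2_eq_square algebra_simps)
  qed
  have dA: "(A has_real_derivative
      - ((2 * m r0 / r0\<^sup>2 - 2 * M1 / r0) * exp (mu r0)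
        + (1 - 2 * m r0 / r0) * exp (mu r0) * U1) * Dn * a0 * a0) (at 0)"
    unfolding A_def
    apply (rule derivative_eq_intros dmn dmun dn refl | (use r0 n0 in simp; fail))+
    using r0 n0 apply (simp add: field_simps power2_eq_square)
    done
  have dG: "((\<lambda>h. A h + h\<^sup>2 * K h + u0 \<bullet> u0) has_real_derivative
      - ((2 * m r0 / r0\<^sup>2 - 2 * M1 / r0) * exp (mu r0)
        + (1 - 2 * m r0 / r0) * exp (mu r0) * U1) * Dn * a0 * a0 + 0 + 0) (at 0)"
    by (intro DERIV_add dA sq_mult_deriv cK DERIV_const)
  show ?thesis unfolding dmetric_def Geq using DERIV_imp_deriv[OF dG]
    by (simp add: r0_def Dn_def algebra_simps)
qed

lemma metric_expand:
  "metric m mu p (v + c *\<^sub>R w) (v + c *\<^sub>R w) =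
     metric m mu p v v + 2 * c * metric m mu p v w + c\<^sup>2 * metric m mu p w w"
  unfolding metric_def Let_def
  by (simp add: inner_add_left inner_add_right inner_commute power2_eq_square algebra_simps add_divide_distrib diff_divide_distrib)

lemma metric_spatial:
  fixes y x :: "real^3"
  assumes y: "y \<noteq> 0" and F: "1 - 2 * m (norm y) / norm y > 0"
  shows "metric m mu (t, y) (0, x) (0, x) \<ge> 0"
    and "x \<noteq> 0 \<Longrightarrow> metric m mu (t, y) (0, x) (0, x) > 0"
proof -
  define r where "r = norm y"
  define F0 where "F0 = 1 - 2 * m r / r"
  have r: "r > 0" using y r_def by simp
  have F0: "F0 > 0" using F r_def F0_def by simp
  have eq: "metric m mu (t, y) (0, x) (0, x) = (1 / F0) * (y \<bullet> x)\<^sup>2 / r\<^sup>2 + (x \<bullet> x - (y \<bullet> x)\<^sup>2 / r\<^sup>2)"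
    unfolding metric_def Let_def r_def F0_def by (simp add: power2_eq_square)
  have cs: "(y \<bullet> x)\<^sup>2 \<le> r\<^sup>2 * (x \<bullet> x)"
  proof -
    have "\<bar>y \<bullet> x\<bar> \<le> norm y * norm x" by (rule Cauchy_Schwarz_ineq2)
    then have "\<bar>y \<bullet> x\<bar>\<^sup>2 \<le> (norm y * norm x)\<^sup>2" by (intro power_mono) auto
    then show ?thesis unfolding r_def by (simp add: power_mult_distrib power2_norm_eq_inner)
  qed
  have t2: "x \<bullet> x - (y \<bullet> x)\<^sup>2 / r\<^sup>2 \<ge> 0" using cs r by (simp add: field_simps)
  have t1: "(1 / F0) * (y \<bullet> x)\<^sup>2 / r\<^sup>2 \<ge> 0" using F0 by simp
  show "metric m mu (t, y) (0, x) (0, x) \<ge> 0" using eq t1 t2 by simp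
  assume x: "x \<noteq> 0"
  show "metric m mu (t, y) (0, x) (0, x) > 0"
  proof (cases "y \<bullet> x = 0")
    case True
    then show ?thesis using eq x by simp
  next
    case False
    then have "(1 / F0) * (y \<bullet> x)\<^sup>2 / r\<^sup>2 > 0" using F0 r by simp
    then show ?thesis using eq t2 by simp
  qed
qed

lemma timelike_fst:
  fixes y :: "real^3"
  assumes y: "y \<noteq> 0" and F: "1 - 2 * m (norm y) / norm y > 0"
    and T: "metric m mu (t, y) T T < 0"
  shows "fst T \<noteq> 0"
proof
  assume "fst T = 0"
  then have "T = (0, snd T)" by (cases T) simp
  then have "metric m mu (t, y) T T \<ge> 0" using metric_spatial(1)[where m=m and y=y and mu=mu and t=t and x="snd T", OF y F] by simp
  then show False using T by simp
qed

lemma null_exists: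
  fixes D :: "real^3 \<Rightarrow> real \<times> (real^3)" and y :: "real^3"
  assumes lin: "linear D" and inj: "inj D" and y: "y \<noteq> 0"
    and F: "1 - 2 * m (norm y) / norm y > 0"
    and z: "metric m mu (t, y) (D z) (D z) < 0"
  shows "\<exists>k\<in>range D. metric m mu (t, y) k k = 0 \<and> fst k \<noteq> 0"
proof -
  define e1 :: "real^3" where "e1 = axis 1 1"
  define e2 :: "real^3" where "e2 = axis 2 1"
  have D0: "D 0 = 0" using lin by (simp add: linear_0)
  have "\<exists>z'. fst (D z') = 0 \<and> D z' \<noteq> 0"
  proof (cases "fst (D e1) = 0")
    case True
    have "e1 \<noteq> 0" unfolding e1_def by (simp add: axis_eq_0_iff)
    then have "D e1 \<noteq> 0" using inj D0 by (metis injD)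
    then show ?thesis using True by blast
  next
    case False
    define c where "c = fst (D e2) / fst (D e1)"
    have Dz: "D (e2 - c *\<^sub>R e1) = D e2 - c *\<^sub>R D e1"
      using lin by (simp add: linear_diff linear_scale)
    have "fst (D (e2 - c *\<^sub>R e1)) = fst (D e2) - c * fst (D e1)" unfolding Dz by simp
    also have "\<dots> = 0" unfolding c_def using False by simp
    finally have "fst (D (e2 - c *\<^sub>R e1)) = 0" .
    moreover have "(e2 - c *\<^sub>R e1) $ 2 = 1" unfolding e1_def e2_def by (simp add: axis_def)
    then have "e2 - c *\<^sub>R e1 \<noteq> 0" by auto
    then have "D (e2 - c *\<^sub>R e1) \<noteq> 0" using inj D0 by (metis injD)
    ultimately show ?thesis by blast
  qed
  then obtain z' where z': "fst (D z') = 0" "D z' \<noteq> 0" by blast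
  define x where "x = snd (D z')"
  have Dz': "D z' = (0, x)" unfolding x_def using z' by (cases "D z'") simp
  have x0: "x \<noteq> 0" using Dz' z' by (auto simp: zero_prod_def)
  define A where "A = metric m mu (t, y) (D z') (D z')"
  define B where "B = metric m mu (t, y) (D z) (D z')"
  define C where "C = metric m mu (t, y) (D z) (D z)"
  have A: "A > 0" unfolding A_def Dz' by (rule metric_spatial(2)[where m=m and y=y and mu=mu and t=t and x=x, OF y F x0])
  have C: "C < 0" using z C_def by simp
  have disc: "B\<^sup>2 - A * C > 0" using A C by (smt (verit) mult_pos_neg zero_le_power2)
  define s where "s = sqrt (B\<^sup>2 - A * C)"
  have s2: "s\<^sup>2 = B\<^sup>2 - A * C" unfolding s_def using disc by simp
  define l where "l = (- B + s) / A"
  have Al: "A * l = - B + s" unfolding l_def using A by simp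
  have quad: "C + 2 * l * B + l\<^sup>2 * A = 0"
  proof -
    have "A * (C + 2 * l * B + l\<^sup>2 * A) = A * C + 2 * B * (A * l) + (A * l)\<^sup>2"
      by (simp add: power2_eq_square algebra_simps)
    also have "\<dots> = 0" unfolding Al using s2 by (simp add: power2_eq_square algebra_simps)
    finally show ?thesis using A by simp
  qed
  define k where "k = D z + l *\<^sub>R D z'"
  have kr: "k \<in> range D" unfolding k_def
    using lin by (metis linear_add linear_scale rangeI)
  have "metric m mu (t, y) k k = 0" unfolding k_def metric_expand
    using quad A_def B_def C_def by simp
  moreover have "fst k \<noteq> 0" unfolding k_def using z' timelike_fst[OF y F z] by simp
  ultimately show ?thesis using kr by blast
qed

lemma hyp_negligible:
  assumes "immersed_hypersurface S U \<phi> D"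
  shows "negligible S"
proof -
  have S: "S = (\<Union>i. \<phi> i ` U i)" and H: "\<forall>i. \<forall>u\<in>U i. (\<phi> i has_derivative D i u) (at u)"
    using assms unfolding immersed_hypersurface_def by auto
  have "negligible (\<phi> i ` U i)" for i
  proof (rule negligible_differentiable_image_lowdim)
    show "DIM(real^3) < DIM(real \<times> (real^3))" by simp
    show "\<phi> i differentiable_on U i"
      unfolding differentiable_on_def using H
      by (meson differentiableI differentiable_at_withinI)
  qed
  then show ?thesis unfolding S by (intro negligible_countable_Union) auto
qed

lemma radius_const:
  fixes g :: "real \<Rightarrow> real \<times> (real^3)"
  assumes inv: "SO3R_invariant S" and neg: "negligible S"
    and cont: "continuous_on {a..b} g" and sub: "g ` {a..b} \<subseteq> S" and ab: "a \<le> b"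
  shows "norm (snd (g a)) = norm (snd (g b))"
proof (rule ccontr)
  assume ne: "norm (snd (g a)) \<noteq> norm (snd (g b))"
  define N where "N = (\<lambda>s. norm (snd (g s)))"
  have cN: "continuous_on {a..b} N" unfolding N_def by (intro continuous_intros cont)
  define c where "c = min (N a) (N b)"
  define d where "d = max (N a) (N b)"
  have cd: "c < d" using ne unfolding c_def d_def N_def by auto
  have c0: "c \<ge> 0" unfolding c_def N_def by simp
  define Ob where "Ob = {p :: real \<times> (real^3). c < norm (snd p) \<and> norm (snd p) < d}"
  have OS: "Ob \<subseteq> S"
  proof
    fix p assume "p \<in> Ob"
    then have p: "c < norm (snd p)" "norm (snd p) < d" unfolding Ob_def by auto
    have "\<exists>s. a \<le> s \<and> s \<le> b \<and> N s = norm (snd p)"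
    proof (cases "N a \<le> N b")
      case True
      then show ?thesis using IVT'[of N a "norm (snd p)" b] p cN ab c_def d_def by auto
    next
      case False
      then show ?thesis using IVT2'[of N b "norm (snd p)" a] p cN ab c_def d_def by auto
    qed
    then obtain s where s: "a \<le> s" "s \<le> b" "N s = norm (snd p)" by blast
    have gs: "g s \<in> S" using sub s by auto
    obtain f where f: "orthogonal_transformation f" "det (matrix f) = 1" "f (snd (g s)) = snd p"
      using rotation_exists[of "snd (g s)" "snd p"] s(3) unfolding N_def by auto
    have rot: "rotation3 f" unfolding rotation3_def using f by simp
    define Fm where "Fm = (\<lambda>(t, y). (t + (fst p - fst (g s)), f y))"
    have e1: "Fm ` S = S"
      using inv rot unfolding SO3R_invariant_def Fm_def by blast
    have e2: "Fm (g s) = p"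
      using f(3) unfolding Fm_def by (simp add: case_prod_beta prod_eq_iff)
    have "p \<in> Fm ` S"
      by (rule image_eqI[of p Fm "g s" S, OF e2[symmetric] gs])
    then show "p \<in> S" using e1 by simp
  qed
  have "open Ob" unfolding Ob_def
    by (intro open_Collect_conj open_Collect_less continuous_on_const continuous_on_norm continuous_on_snd continuous_on_id)
  moreover have "Ob \<noteq> {}"
  proof -
    define w :: "real^3" where "w = ((c + d) / 2) *\<^sub>R axis 1 1"
    have "norm w = (c + d) / 2" unfolding w_def using c0 cd by simp
    then have "(0, w) \<in> Ob" unfolding Ob_def using cd by simp
    then show ?thesis by blast
  qed
  ultimately have "\<not> negligible Ob" by (rule open_not_negligible)
  moreover have "negligible Ob" using neg OS negligible_subset by blast
  ultimately show False by blast
qed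

lemma deriv_locconst:
  fixes f :: "real \<Rightarrow> real"
  assumes T: "open T" "s \<in> T" and c: "\<forall>x\<in>T. f x = c" and D: "(f has_real_derivative D) (at s)"
  shows "D = 0"
proof -
  have "(f has_real_derivative 0) (at s)"
    by (rule has_field_derivative_transform_within_open[OF DERIV_const T]) (use c in simp)
  then show ?thesis using D DERIV_unique by blast
qed

lemma comp_deriv:
  fixes \<gamma> :: "real \<Rightarrow> real \<times> (real^3)"
  assumes "(\<gamma> has_vector_derivative v) (at s)"
  shows "((\<lambda>s. snd (\<gamma> s) $ j) has_real_derivative snd v $ j) (at s)"
proof -
  have bl: "bounded_linear (\<lambda>p::real \<times> (real^3). snd p $ j)"
    by (rule bounded_linear_compose[OF bounded_linear_vec_nth bounded_linear_snd])
  have "(\<gamma> has_derivative (\<lambda>h. h *\<^sub>R v)) (at s)" using assms unfolding has_vector_derivative_def .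
  then have "((\<lambda>s. snd (\<gamma> s) $ j) has_derivative (\<lambda>h. snd (h *\<^sub>R v) $ j)) (at s)"
    by (rule bounded_linear.has_derivative[OF bl])
  moreover have "(\<lambda>h. snd (h *\<^sub>R v) $ j) = (*) (snd v $ j)" by (rule ext) simp
  ultimately show ?thesis unfolding has_field_derivative_def by simp
qed

theorem theorem6:
  fixes m mu :: "real \<Rightarrow> real"
  assumes reg_m: "C1_on {0<..} m" "piecewise_C2 {0<..} m"
    and reg_mu: "C1_on {0<..} mu" "piecewise_C2 {0<..} mu"
    and fluid: "\<forall>r>0. \<forall>m2 mu2. (deriv m has_real_derivative m2) (at r)
                   \<and> (deriv mu has_real_derivative mu2) (at r)
                   \<longrightarrow> p1 m mu r = p2 m mu m2 mu2 r"
    and lim_p: "((\<lambda>r. 4 * pi * r\<^sup>2 * p1 m mu r) \<longlongrightarrow> 0) at_top"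
    and lim_rho: "((\<lambda>r. 4 * pi * r\<^sup>2 * rho m r) \<longlongrightarrow> 0) at_top"
    and bound: "\<forall>r>0. 24 / 7 * m r < r"
    and energy: "\<forall>r>0. p1 m mu r \<le> rho m r / 3"
  shows "\<not> (\<exists>S. SO3R_invariant S \<and> timelike_photon_surface m mu S)"
proof
  assume "\<exists>S. SO3R_invariant S \<and> timelike_photon_surface m mu S"
  then obtain S where inv: "SO3R_invariant S" and ph: "timelike_photon_surface m mu S" by blast
  from ph obtain U \<phi> D where S0: "S \<noteq> {}" and imm: "immersed_hypersurface S U \<phi> D"
    and tl: "\<forall>i. \<forall>u\<in>U i. \<exists>z. metric m mu (\<phi> i u) (D i u z) (D i u z) < 0"
    and pg: "\<forall>i. \<forall>u\<in>U i. \<forall>k\<in>range (D i u).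
          k \<noteq> 0 \<and> metric m mu (\<phi> i u) k k = 0 \<longrightarrow>
          (\<exists>\<gamma> eps. geodesic m mu \<gamma> eps \<and> \<gamma> 0 = \<phi> i u \<and>
             (\<gamma> has_vector_derivative k) (at 0) \<and> \<gamma> ` {-eps<..<eps} \<subseteq> S)"
    unfolding timelike_photon_surface_def by blast
  have neg: "negligible S" by (rule hyp_negligible[OF imm])
  have Sdef: "S = (\<Union>i. \<phi> i ` U i)" "S \<subseteq> spacetime"
    and H: "\<forall>i. \<forall>u\<in>U i. (\<phi> i has_derivative D i u) (at u) \<and> inj (D i u)"
    using imm unfolding immersed_hypersurface_def by auto
  obtain q where qS: "q \<in> S" using S0 by blast
  then obtain i u where iu: "u \<in> U i" "q = \<phi> i u" using Sdef by auto
  obtain t0 Y0 where q: "q = (t0, Y0)" by (cases q)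
  have Y0: "Y0 \<noteq> 0" using qS Sdef(2) q unfolding spacetime_def by auto
  define r0 where "r0 = norm Y0"
  have r0: "r0 > 0" using Y0 r0_def by simp
  have "2 * m r0 < r0" using bound r0 by force
  then have F0: "1 - 2 * m (norm Y0) / norm Y0 > 0" using r0 unfolding r0_def[symmetric]
    by (simp add: field_simps)
  have lin: "linear (D i u)" using H iu has_derivative_linear by blast
  have inj: "inj (D i u)" using H iu by blast
  obtain z where z: "metric m mu (t0, Y0) (D i u z) (D i u z) < 0" using tl iu q by auto
  obtain k where k: "k \<in> range (D i u)" "metric m mu (t0, Y0) k k = 0" "fst k \<noteq> 0"
    using null_exists[where m=m and mu=mu and t=t0 and z=z, OF lin inj Y0 F0 z] by blast
  have "k \<noteq> 0" using k(3) by (auto simp: zero_prod_def)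
  then obtain \<gamma> eps where g: "geodesic m mu \<gamma> eps" "\<gamma> 0 = q" "(\<gamma> has_vector_derivative k) (at 0)"
      "\<gamma> ` {-eps<..<eps} \<subseteq> S"
    using pg iu k q by metis
  from g(1) obtain v where eps: "eps > 0"
    and gv: "\<forall>s\<in>{-eps<..<eps}. (\<gamma> has_vector_derivative v s) (at s) \<and>
        (\<forall>w. ((\<lambda>s. metric m mu (\<gamma> s) (v s) w) has_real_derivative
               (1/2 * dmetric m mu (\<gamma> s) w (v s))) (at s))"
    unfolding geodesic_def by blast
  define I where "I = {-eps<..<eps}"
  have I0: "0 \<in> I" unfolding I_def using eps by simp
  have oI: "open I" unfolding I_def by simp
  have v0: "v 0 = k"
    using vector_derivative_unique_at[OF _ g(3)] gv I0 unfolding I_def by blast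
  obtain a0 u0 where k2: "k = (a0, u0)" by (cases k)
  have a0: "a0 \<noteq> 0" using k(3) k2 by simp
  have rad: "norm (snd (\<gamma> s)) = r0" if s: "s \<in> I" for s
  proof -
    have sub: "{min 0 s..max 0 s} \<subseteq> I" using s I0 unfolding I_def by auto
    have cont: "continuous_on {min 0 s..max 0 s} \<gamma>"
    proof (rule continuous_at_imp_continuous_on, rule ballI)
      fix x assume "x \<in> {min 0 s..max 0 s}"
      then have "x \<in> I" using sub by blast
      then have "(\<gamma> has_vector_derivative v x) (at x)" using gv unfolding I_def by blast
      then show "isCont \<gamma> x" by (rule has_vector_derivative_continuous)
    qed
    have im: "\<gamma> ` {min 0 s..max 0 s} \<subseteq> S" using sub g(4) unfolding I_def by blast
    have "norm (snd (\<gamma> (min 0 s))) = norm (snd (\<gamma> (max 0 s)))"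
      by (rule radius_const[OF inv neg cont im]) simp
    then show ?thesis using g(2) q r0_def by (cases "s \<ge> 0") auto
  qed
  define Y where "Y = (\<lambda>s. snd (\<gamma> s))"
  define uu where "uu = (\<lambda>s. snd (v s))"
  have dY: "((\<lambda>s. Y s $ j) has_real_derivative uu s $ j) (at s)" if "s \<in> I" for s j
    unfolding Y_def uu_def using comp_deriv gv that unfolding I_def by blast
  have Yu: "Y s \<bullet> uu s = 0" if s: "s \<in> I" for s
  proof -
    have dsum: "((\<lambda>s. \<Sum>j\<in>UNIV. Y s $ j * Y s $ j) has_real_derivative
        (\<Sum>j\<in>UNIV. uu s $ j * Y s $ j + uu s $ j * Y s $ j)) (at s)"
      by (intro DERIV_sum DERIV_mult dY s)
    have csum: "\<forall>x\<in>I. (\<Sum>j\<in>UNIV. Y x $ j * Y x $ j) = r0\<^sup>2"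
    proof
      fix x assume "x \<in> I"
      have "(\<Sum>j\<in>UNIV. Y x $ j * Y x $ j) = Y x \<bullet> Y x" by (simp add: inner_vec_def)
      also have "\<dots> = (norm (Y x))\<^sup>2" by (simp add: power2_norm_eq_inner)
      finally show "(\<Sum>j\<in>UNIV. Y x $ j * Y x $ j) = r0\<^sup>2" using rad[OF \<open>x \<in> I\<close>] Y_def by simp
    qed
    have "(\<Sum>j\<in>UNIV. uu s $ j * Y s $ j + uu s $ j * Y s $ j) = 0"
      by (rule deriv_locconst[OF oI s csum dsum])
    moreover have "(\<Sum>j\<in>UNIV. uu s $ j * Y s $ j + uu s $ j * Y s $ j) = 2 * (Y s \<bullet> uu s)"
      by (simp add: inner_vec_def sum.distrib sum_distrib_left algebra_simps)
    ultimately show ?thesis by simp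
  qed
  have me: "metric m mu (\<gamma> s) (v s) (0, e) = uu s \<bullet> e" if s: "s \<in> I" for s e
    using Yu[OF s] unfolding metric_def Let_def Y_def uu_def by simp
  define fd where "fd = (2 * m (norm Y0) / (norm Y0)\<^sup>2 - 2 * deriv m (norm Y0) / norm Y0) * exp (mu (norm Y0))
        + (1 - 2 * m (norm Y0) / norm Y0) * exp (mu (norm Y0)) * deriv mu (norm Y0)"
  have Y00: "Y 0 = Y0" unfolding Y_def using g(2) q by simp
  have uu0: "uu 0 = u0" unfolding uu_def using v0 k2 by simp
  have Yu0: "Y0 \<bullet> u0 = 0" using Yu[OF I0] Y00 uu0 by simp
  have dmv: "dmetric m mu (t0, Y0) (0, e) (a0, u0) = - (a0 * a0) * fd * ((Y0 \<bullet> e) / norm Y0)" for e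
    unfolding fd_def
    by (rule dmetric_spatial[OF Y0 Yu0]) (use C1_facts(1)[OF reg_m(1)] C1_facts(1)[OF reg_mu(1)] r0 r0_def F0 in auto)
  have du: "((\<lambda>s. uu s $ j) has_real_derivative
      1/2 * (- (a0 * a0) * fd * (Y0 $ j / norm Y0))) (at 0)" for j
  proof -
    have "((\<lambda>s. metric m mu (\<gamma> s) (v s) (0, axis j 1)) has_real_derivative
        (1/2 * dmetric m mu (\<gamma> 0) (0, axis j 1) (v 0))) (at 0)"
      using gv I0 unfolding I_def by blast
    then have "((\<lambda>s. metric m mu (\<gamma> s) (v s) (0, axis j 1)) has_real_derivative
        1/2 * (- (a0 * a0) * fd * (Y0 $ j / norm Y0))) (at 0)"
      using dmv[of "axis j 1"] g(2) q v0 k2 by (simp add: inner_axis)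
    then show ?thesis
      by (rule has_field_derivative_transform_within_open[OF _ oI I0])
         (simp add: me inner_axis)
  qed
  have dsum2: "((\<lambda>s. \<Sum>j\<in>UNIV. Y s $ j * uu s $ j) has_real_derivative
      (\<Sum>j\<in>UNIV. uu 0 $ j * uu 0 $ j + 1/2 * (- (a0 * a0) * fd * (Y0 $ j / norm Y0)) * Y 0 $ j)) (at 0)"
    by (intro DERIV_sum DERIV_mult dY I0 du)
  have csum2: "\<forall>x\<in>I. (\<Sum>j\<in>UNIV. Y x $ j * uu x $ j) = 0"
    using Yu by (simp add: inner_vec_def)
  have S0: "(\<Sum>j\<in>UNIV. uu 0 $ j * uu 0 $ j + 1/2 * (- (a0 * a0) * fd * (Y0 $ j / norm Y0)) * Y 0 $ j) = 0"
    by (rule deriv_locconst[OF oI I0 csum2 dsum2])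
  have "(\<Sum>j\<in>UNIV. uu 0 $ j * uu 0 $ j + 1/2 * (- (a0 * a0) * fd * (Y0 $ j / norm Y0)) * Y 0 $ j)
      = u0 \<bullet> u0 - 1/2 * (a0 * a0) * fd / norm Y0 * (Y0 \<bullet> Y0)"
    unfolding uu0 Y00 by (simp add: inner_vec_def sum.distrib sum_distrib_left sum_subtractf sum_divide_distrib algebra_simps)
  also have "Y0 \<bullet> Y0 = r0\<^sup>2" unfolding r0_def by (simp add: power2_norm_eq_inner)
  finally have e1: "u0 \<bullet> u0 = 1/2 * (a0 * a0) * fd * r0" using S0 r0 r0_def
    by (simp add: power2_eq_square)
  have e2: "u0 \<bullet> u0 = (1 - 2 * m r0 / r0) * exp (mu r0) * (a0 * a0)"
    using k(2) Yu0 unfolding k2 metric_def Let_def r0_def by (simp add: algebra_simps)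
  have "(1 - 2 * m r0 / r0) * exp (mu r0) * (a0 * a0) = u0 \<bullet> u0" by (rule e2[symmetric])
  also have "\<dots> = 1/2 * (a0 * a0) * fd * r0" by (rule e1)
  also have "\<dots> = (1/2 * fd * r0) * (a0 * a0)" by (simp only: mult_ac)
  finally have "(1 - 2 * m r0 / r0) * exp (mu r0) * (a0 * a0) = (1/2 * fd * r0) * (a0 * a0)" .
  moreover have "a0 * a0 \<noteq> 0" using a0 by simp
  ultimately have "(1 - 2 * m r0 / r0) * exp (mu r0) = 1/2 * fd * r0"
    by (rule mult_right_cancel[THEN iffD1, rotated])
  also have "1/2 * fd * r0 = 1/2 * r0 * ((2 * m r0 / r0\<^sup>2 - 2 * deriv m r0 / r0)
        + (1 - 2 * m r0 / r0) * deriv mu r0) * exp (mu r0)"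
    unfolding fd_def r0_def[symmetric] by (simp only: distrib_left distrib_right mult_ac)
  finally have "(1 - 2 * m r0 / r0) * exp (mu r0) = 1/2 * r0 * ((2 * m r0 / r0\<^sup>2 - 2 * deriv m r0 / r0)
        + (1 - 2 * m r0 / r0) * deriv mu r0) * exp (mu r0)" .
  then have eqF: "1 - 2 * m r0 / r0 = 1/2 * r0 * ((2 * m r0 / r0\<^sup>2 - 2 * deriv m r0 / r0)
        + (1 - 2 * m r0 / r0) * deriv mu r0)" by simp
  have i1: "r0 * (1 - 2 * m r0 / r0) = r0 - 2 * m r0" using r0 by (simp add: field_simps)
  have i2: "r0 * (1/2 * r0 * ((2 * m r0 / r0\<^sup>2 - 2 * deriv m r0 / r0)
        + (1 - 2 * m r0 / r0) * deriv mu r0)) =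
      m r0 - r0 * deriv m r0 + r0 * (r0 - 2 * m r0) * deriv mu r0 / 2"
    using r0 by (simp add: field_simps power2_eq_square)
  have eqL: "r0 - 2 * m r0 = m r0 - r0 * deriv m r0 + r0 * (r0 - 2 * m r0) * deriv mu r0 / 2"
    using eqF i1 i2 by metis
  have "hfun m mu r0 = (r0 - 2 * m r0) - (m r0 - r0 * deriv m r0 + r0 * (r0 - 2 * m r0) * deriv mu r0 / 2)"
    unfolding hfun_def Qf_def by (simp add: field_simps)
  then have "hfun m mu r0 = 0" using eqL by simp
  moreover have "hfun m mu r0 \<noteq> 0"
    by (rule no_zero[OF reg_m reg_mu fluid lim_p bound energy r0])
  ultimately show False by simp
qed

end
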